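(* Let $n,m\geq1$. Let $p_{ij}\in\mathbb{R}$ ($i=1,\ldots,n$, $j=1,\ldots,m$), $w_{j}>0$, $d_{j}>0$, $h_{j}\in\mathbb{R}$ ($j=1,\ldots,m$), $b_{ik}\in\mathbb{R}\cup\{-\infty\}$ ($i,k=1,\ldots,n$), nonzero reals $c_{1},\ldots,c_{n}$, and reals $f_{i}\leq g_{i}$ ($i=1,\ldots,n$). Consider the problem of minimizing over $\bm{x}=(x_{1},\ldots,x_{n})^{T}\in\mathbb{R}^{n}$ $$\max_{1\leq j\leq m}\Big(w_{j}\max_{1\leq i\leq n}|x_{i}-p_{ij}|+h_{j}\Big)$$ subject to $\max_{1\leq i\leq n}|x_{i}-p_{ij}|\leq d_{j}$ ($j=1,\ldots,m$), $b_{ik}+c_{k}x_{k}\leq c_{i}x_{i}$ ($i,k=1,\ldots,n$), and $f_{i}\leq x_{i}\leq g_{i}$ ($i=1,\ldots,n$). Suppose that 1. $\max_{1\leq i_{1},\ldots,i_{k-1}\leq n,\ i_{0}=i_{k}=i}(b_{i_{0}i_{1}}+\cdots+b_{i_{k-1}i_{k}})\leq0$ for all $i,k=1,\ldots,n$; 2. $b_{ik}^{\ast}+\max\{\max_{1\leq l\leq m}(c_{k}p_{kl}-|c_{k}|d_{l}),\min\{c_{k}f_{k},c_{k}g_{k}\}\}\leq\min\{\min_{1\leq j\leq m}(c_{i}p_{ij}+|c_{i}|d_{j}),\max\{c_{i}f_{i},c_{i}g_{i}\}\}$ for all $i,k=1,\ldots,n$. Then the minimum value of the problem is $$\theta=\max_{1\leq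 i,k\leq n}\max_{1\leq j,l\leq m}\max\Bigg\{\frac{|c_{i}|w_{l}h_{j}+|c_{k}|w_{j}h_{l}}{|c_{i}|w_{l}+|c_{k}|w_{j}}+\frac{w_{j}w_{l}}{|c_{k}|w_{j}+|c_{i}|w_{l}}(b_{ik}^{\ast}-c_{i}p_{ij}+c_{k}p_{kl}),$$ $$h_{j}+\frac{w_{j}}{|c_{i}|}\big(b_{ik}^{\ast}-c_{i}p_{ij}+\max\{c_{k}p_{kl}-|c_{k}|d_{l},\min\{c_{k}f_{k},c_{k}g_{k}\}\}\big),$$ $$h_{l}+\frac{w_{l}}{|c_{k}|}\big(b_{ik}^{\ast}-\min\{c_{i}p_{ij}+|c_{i}|d_{j},\max\{c_{i}f_{i},c_{i}g_{i}\}\}+c_{k}p_{kl}\big)\Bigg\},$$ and all solution vectors $\bm{x}=(x_{i})$ have entries $x_{i}=y_{i}/c_{i}$, where $y_{i}=\max_{1\leq k\leq n}(b_{ik}^{\ast}+v_{k})$, $i=1,\ldots,n$, and the parameter vector $\bm{v}=(v_{k})$ satisfies, for each $k=1,\ldots,n$, $$\max_{1\leq j\leq m}\max\left\{\frac{|c_{k}|(h_{j}-\theta)}{w_{j}}+c_{k}p_{kj},\ c_{k}p_{kj}-|c_{k}|d_{j},\ \min\{c_{k}f_{k},c_{k}g_{k}\}\right\}\leq v_{k}$$ $$\leq\min_{1\leq i\leq n}\left(\min_{1\leq j\leq m}\min\left\{\frac{|c_{i}|(\theta-h_{j})}{w_{j}}+c_{i}p_{ij},\ c_{i}p_{ij}+|c_{i}|d_{j},\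 \max\{c_{i}f_{i},c_{i}g_{i}\}\right\}-b_{ik}^{\ast}\right).$$
   Context: Conventions: $-\infty+a=-\infty$ for any $a$, and $a-(-\infty)=+\infty$ for real $a$. For $i,k=1,\ldots,n$ define $$\beta_{ik}=\max_{1\leq l\leq n-1}\ \max_{1\leq i_{1},\ldots,i_{l-1}\leq n,\ i_{0}=i,\ i_{l}=k}(b_{i_{0}i_{1}}+\cdots+b_{i_{l-1}i_{l}})$$ (an empty maximum is $-\infty$), and set $b_{ik}^{\ast}=\beta_{ik}$ if $i\neq k$ and $b_{ii}^{\ast}=\max\{\beta_{ii},0\}$. *)

theory Defs
  imports Complex_Main "HOL-Library.Extended_Real"
begin

text \<open>Elements of
  \<real> \<union> {-\<infinity>} are represented by extended reals (assumed \<noteq> \<infinity>).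
  In ereal, -\<infinity> + a = -\<infinity> for finite a, and a - (-\<infinity>) = \<infinity>.\<close>

definition path_weight :: "(nat \<Rightarrow> nat \<Rightarrow> ereal) \<Rightarrow> (nat \<Rightarrow> nat) \<Rightarrow> nat \<Rightarrow> ereal" where
  "path_weight b p l = (\<Sum>t<l. b (p t) (p (Suc t)))"

text \<open>beta_ik: maximum over path lengths 1..n-1 and intermediate vertices in {1..n};
  the empty supremum in ereal is -\<infinity>.\<close>
definition beta :: "nat \<Rightarrow> (nat \<Rightarrow> nat \<Rightarrow> ereal) \<Rightarrow> nat \<Rightarrow> nat \<Rightarrow> ereal" where
  "beta n b i k = Sup {path_weight b p l | l p. 1 \<le> l \<and> l \<le> n - 1 \<and> p 0 = i \<and> p l = k
                        \<and> (\<forall>t\<in>{1..<l}. p t \<in> {1..n})}"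

definition bstar :: "nat \<Rightarrow> (nat \<Rightarrow> nat \<Rightarrow> ereal) \<Rightarrow> nat \<Rightarrow> nat \<Rightarrow> ereal" where
  "bstar n b i k = (if i = k then max (beta n b i i) 0 else beta n b i k)"

definition cheb :: "nat \<Rightarrow> (nat \<Rightarrow> real) \<Rightarrow> (nat \<Rightarrow> nat \<Rightarrow> real) \<Rightarrow> nat \<Rightarrow> real" where
  "cheb n x p j = Max ((\<lambda>i. \<bar>x i - p i j\<bar>) ` {1..n})"

definition objective :: "nat \<Rightarrow> nat \<Rightarrow> (nat \<Rightarrow> nat \<Rightarrow> real) \<Rightarrow> (nat \<Rightarrow> real) \<Rightarrow> (nat \<Rightarrow> real)
    \<Rightarrow> (nat \<Rightarrow> real) \<Rightarrow> real" where
  "objective n m p w h x = Max ((\<lambda>j. w j * cheb n x p j + h j) ` {1..m})"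

definition feasible :: "nat \<Rightarrow> nat \<Rightarrow> (nat \<Rightarrow> nat \<Rightarrow> real) \<Rightarrow> (nat \<Rightarrow> real) \<Rightarrow> (nat \<Rightarrow> nat \<Rightarrow> ereal)
    \<Rightarrow> (nat \<Rightarrow> real) \<Rightarrow> (nat \<Rightarrow> real) \<Rightarrow> (nat \<Rightarrow> real) \<Rightarrow> (nat \<Rightarrow> real) \<Rightarrow> bool" where
  "feasible n m p d b c f g x \<longleftrightarrow>
     (\<forall>j\<in>{1..m}. cheb n x p j \<le> d j) \<and>
     (\<forall>i\<in>{1..n}. \<forall>k\<in>{1..n}. b i k + ereal (c k * x k) \<le> ereal (c i * x i)) \<and>
     (\<forall>i\<in>{1..n}. f i \<le> x i \<and> x i \<le> g i)"

definition lowq :: "(nat \<Rightarrow> nat \<Rightarrow> real) \<Rightarrow> (nat \<Rightarrow> real) \<Rightarrow> (nat \<Rightarrow> real) \<Rightarrow> (nat \<Rightarrow> real)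
    \<Rightarrow> (nat \<Rightarrow> real) \<Rightarrow> nat \<Rightarrow> nat \<Rightarrow> real" where
  "lowq p d c f g k l = max (c k * p k l - \<bar>c k\<bar> * d l) (min (c k * f k) (c k * g k))"

definition uppq :: "(nat \<Rightarrow> nat \<Rightarrow> real) \<Rightarrow> (nat \<Rightarrow> real) \<Rightarrow> (nat \<Rightarrow> real) \<Rightarrow> (nat \<Rightarrow> real)
    \<Rightarrow> (nat \<Rightarrow> real) \<Rightarrow> nat \<Rightarrow> nat \<Rightarrow> real" where
  "uppq p d c f g i j = min (c i * p i j + \<bar>c i\<bar> * d j) (max (c i * f i) (c i * g i))"

definition theta :: "nat \<Rightarrow> nat \<Rightarrow> (nat \<Rightarrow> nat \<Rightarrow> real) \<Rightarrow> (nat \<Rightarrow> real) \<Rightarrow> (nat \<Rightarrow> real)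
    \<Rightarrow> (nat \<Rightarrow> real) \<Rightarrow> (nat \<Rightarrow> nat \<Rightarrow> ereal) \<Rightarrow> (nat \<Rightarrow> real) \<Rightarrow> (nat \<Rightarrow> real) \<Rightarrow> (nat \<Rightarrow> real) \<Rightarrow> ereal" where
  "theta n m p w d h b c f g = Max ((\<lambda>(i, k, j, l).
     max (max
       (ereal ((\<bar>c i\<bar> * w l * h j + \<bar>c k\<bar> * w j * h l) / (\<bar>c i\<bar> * w l + \<bar>c k\<bar> * w j))
         + ereal (w j * w l / (\<bar>c k\<bar> * w j + \<bar>c i\<bar> * w l))
           * (bstar n b i k - ereal (c i * p i j) + ereal (c k * p k l)))
       (ereal (h j) + ereal (w j / \<bar>c i\<bar>)
           * (bstar n b i k - ereal (c i * p i j) + ereal (lowq p d c f g k l))))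
       (ereal (h l) + ereal (w l / \<bar>c k\<bar>)
           * (bstar n b i k - ereal (uppq p d c f g i j) + ereal (c k * p k l))))
     ` ({1..n} \<times> {1..n} \<times> {1..m} \<times> {1..m}))"

end

theory Submission
  imports Defs
begin


lemma pw_Suc: "path_weight b q (Suc L) = path_weight b q L + b (q L) (q (Suc L))"
  by (simp add: path_weight_def)

lemma pw_shift0: "path_weight b q (Suc L) = b (q 0) (q 1) + path_weight b (\<lambda>u. q (Suc u)) L"
  unfolding path_weight_def sum.lessThan_Suc_shift by simp

locale cor2 =
  fixes n m :: nat
    and p :: "nat \<Rightarrow> nat \<Rightarrow> real"
    and w d h c f g :: "nat \<Rightarrow> real"
    and b :: "nat \<Rightarrow> nat \<Rightarrow> ereal"
  assumes n: "n \<ge> 1" and m: "m \<ge> 1"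
    and w: "\<forall>j\<in>{1..m}. w j > 0"
    and d: "\<forall>j\<in>{1..m}. d j > 0"
    and b_ninf: "\<forall>i\<in>{1..n}. \<forall>k\<in>{1..n}. b i k \<noteq> \<infinity>"
    and c: "\<forall>i\<in>{1..n}. c i \<noteq> 0"
    and fg: "\<forall>i\<in>{1..n}. f i \<le> g i"
    and cyc: "\<forall>i\<in>{1..n}. \<forall>l\<in>{1..n}. \<forall>q. q 0 = i \<and> q l = i \<and> (\<forall>t\<in>{1..<l}. q t \<in> {1..n})
               \<longrightarrow> path_weight b q l \<le> 0"
    and cond2: "\<forall>i\<in>{1..n}. \<forall>k\<in>{1..n}.
       bstar n b i k + ereal (max (Max ((\<lambda>l. c k * p k l - \<bar>c k\<bar> * d l) ` {1..m})) (min (c k * f k) (c k * g k)))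
         \<le> ereal (min (Min ((\<lambda>j. c i * p i j + \<bar>c i\<bar> * d j) ` {1..m})) (max (c i * f i) (c i * g i)))"
begin

lemma pw_pot:
  assumes "\<forall>i\<in>{1..n}. \<forall>k\<in>{1..n}. b i k + ereal (y k) \<le> ereal (y i)" "\<forall>u\<le>L. q u \<in> {1..n}"
  shows "path_weight b q L + ereal (y (q L)) \<le> ereal (y (q 0))"
  using assms(2)
proof (induction L)
  case 0
  then show ?case by (simp add: path_weight_def)
next
  case (Suc L)
  have "path_weight b q (Suc L) + ereal (y (q (Suc L))) = path_weight b q L + (b (q L) (q (Suc L)) + ereal (y (q (Suc L))))"
    by (simp add: pw_Suc add.assoc)
  also have "\<dots> \<le> path_weight b q L + ereal (y (q L))"
    using assms(1) Suc.prems by (intro add_left_mono) auto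
  also have "\<dots> \<le> ereal (y (q 0))" using Suc by auto
  finally show ?case .
qed

lemma beta_pot:
  assumes "\<forall>i\<in>{1..n}. \<forall>k\<in>{1..n}. b i k + ereal (y k) \<le> ereal (y i)" "i \<in> {1..n}" "k \<in> {1..n}"
  shows "bstar n b i k + ereal (y k) \<le> ereal (y i)"
proof -
  have "beta n b i k \<le> ereal (y i - y k)"
    unfolding beta_def
  proof (rule Sup_least)
    fix x assume "x \<in> {path_weight b p l | l p. 1 \<le> l \<and> l \<le> n - 1 \<and> p 0 = i \<and> p l = k
                        \<and> (\<forall>t\<in>{1..<l}. p t \<in> {1..n})}"
    then obtain l q where h: "1 \<le> l" "l \<le> n - 1" "q 0 = i" "q l = k" "\<forall>t\<in>{1..<l}. q t \<in> {1..n}"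
      and x: "x = path_weight b q l" by blast
    have "\<forall>u\<le>l. q u \<in> {1..n}"
    proof (intro allI impI)
      fix u assume "u \<le> l"
      then consider "u = 0" | "u = l" | "u \<in> {1..<l}" by fastforce
      then show "q u \<in> {1..n}" using h assms by cases auto
    qed
    from pw_pot[OF assms(1) this] h have "path_weight b q l + ereal (y k) \<le> ereal (y i)" by simp
    then show "x \<le> ereal (y i - y k)" unfolding x
      by (cases "path_weight b q l") auto
  qed
  then have "beta n b i k + ereal (y k) \<le> ereal (y i)"
    by (cases "beta n b i k") auto
  then show ?thesis unfolding bstar_def by (auto simp: max_def)
qed

lemma path_le_bstar:
  assumes "i \<in> {1..n}" "k \<in> {1..n}" "1 \<le> L" "q 0 = i" "q L = k" "\<forall>u\<le>L. q u \<in> {1..n}"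
  shows "path_weight b q L \<le> bstar n b i k"
  using assms
proof (induction L arbitrary: q k rule: less_induct)
  case (less L)
  show ?case
  proof (cases "L \<le> n - 1")
    case True
    then have "path_weight b q L \<in> {path_weight b p l | l p. 1 \<le> l \<and> l \<le> n - 1 \<and> p 0 = i \<and> p l = k
                        \<and> (\<forall>t\<in>{1..<l}. p t \<in> {1..n})}" using less.prems by fastforce
    then have "path_weight b q L \<le> beta n b i k" unfolding beta_def by (rule Sup_upper)
    then show ?thesis unfolding bstar_def by (auto simp: le_max_iff_disj)
  next
    case False
    hence Ln: "n \<le> L" by auto
    have "\<not> inj_on q {0..n}"
    proof
      assume "inj_on q {0..n}"
      moreover have "q ` {0..n} \<subseteq> {1..n}" using less.prems Ln by auto
      ultimately have "card {0..n} \<le> card {1..n}" by (intro card_inj_on_le) auto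
      then show False by simp
    qed
    then obtain x y where xy: "x \<in> {0..n}" "y \<in> {0..n}" "q x = q y" "x \<noteq> y" unfolding inj_on_def by blast
    obtain s t where st: "s < t" "t \<le> n" "q s = q t"
    proof (cases "x < y")
      case True then show ?thesis using that[of x y] xy by auto
    next
      case False then show ?thesis using that[of y x] xy by auto
    qed
    define F where "F u = b (q u) (q (Suc u))" for u
    have pwF: "path_weight b q L = sum F {0..<L}" by (simp add: path_weight_def F_def lessThan_atLeast0)
    have split: "path_weight b q L = sum F {0..<s} + sum F {s..<t} + sum F {t..<L}"
      unfolding pwF using st Ln
      by (simp add: sum.atLeastLessThan_concat add.assoc)
    have qN: "q s \<in> {1..n}" using less.prems st Ln by auto
    have cyc_le: "sum F {s..<t} \<le> 0"
    proof -
      have "sum F {s..<t} = path_weight b (\<lambda>u. q (s+u)) (t-s)"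
        unfolding path_weight_def lessThan_atLeast0 sum.atLeastLessThan_shift_0[of F s t] by (simp add: F_def comp_def)
      also have "\<dots> \<le> 0"
        using cyc qN st less.prems Ln by (intro cyc[rule_format, of "q s" "t - s"]) auto
      finally show ?thesis .
    qed
    show ?thesis
    proof (cases "s = 0 \<and> t = L")
      case True
      then have "i = k" using st less.prems by auto
      have "path_weight b q L \<le> 0"
        using cyc less.prems True st by (intro cyc[rule_format, of i L]) auto
      also have "0 \<le> bstar n b i k" using \<open>i = k\<close> by (simp add: bstar_def)
      finally show ?thesis .
    next
      case False
      define L' where "L' = L - (t - s)"
      have L'1: "1 \<le> L'" "L' < L" "s \<le> L'" using False st Ln unfolding L'_def by auto
      define q' where "q' u = (if u \<le> s then q u else q (u + (t - s)))" for u
      have "path_weight b q' L' = sum F {0..<s} + sum F {t..<L}"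
      proof -
        have "path_weight b q' L' = (\<Sum>u\<in>{0..<s}. b (q' u) (q' (Suc u))) + (\<Sum>u\<in>{s..<L'}. b (q' u) (q' (Suc u)))"
          unfolding path_weight_def lessThan_atLeast0 using L'1 by (simp add: sum.atLeastLessThan_concat)
        also have "(\<Sum>u\<in>{0..<s}. b (q' u) (q' (Suc u))) = sum F {0..<s}"
          by (rule sum.cong) (auto simp: q'_def F_def)
        also have "(\<Sum>u\<in>{s..<L'}. b (q' u) (q' (Suc u))) = (\<Sum>u\<in>{s..<L'}. F (u + (t - s)))"
          using st by (intro sum.cong) (auto simp: q'_def F_def)
        also have "\<dots> = sum F {s + (t - s)..<L' + (t - s)}"
          by (rule sum.shift_bounds_nat_ivl[symmetric])
        also have "\<dots> = sum F {t..<L}"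
        proof -
          have "s + (t - s) = t" "L' + (t - s) = L" using st Ln unfolding L'_def by auto
          then show ?thesis by simp
        qed
        finally show ?thesis by simp
      qed
      moreover have "path_weight b q' L' \<le> bstar n b i k"
      proof (rule less.IH[OF L'1(2) less.prems(1)])
        show "k \<in> {1..n}" "1 \<le> L'" by fact+
        show "q' 0 = i" using less.prems by (simp add: q'_def)
        show "q' L' = k"
        proof (cases "L' \<le> s")
          case True then have "L' = s" "t = L" using L'1 st Ln unfolding L'_def by auto
          then show ?thesis using st less.prems by (simp add: q'_def)
        next
          case False then show ?thesis using st Ln less.prems unfolding q'_def L'_def by auto
        qed
        show "\<forall>u\<le>L'. q' u \<in> {1..n}" using less.prems L'1 st Ln unfolding q'_def L'_def by auto
      qed
      moreover have "path_weight b q L \<le> sum F {0..<s} + sum F {t..<L}"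
      proof -
        have "sum F {0..<s} + sum F {s..<t} \<le> sum F {0..<s} + 0"
          using cyc_le by (rule add_left_mono)
        then show ?thesis unfolding split by (simp add: add_right_mono)
      qed
      ultimately show ?thesis by simp
    qed
  qed
qed

lemma path_verts:
  fixes q :: "nat \<Rightarrow> nat"
  assumes "i \<in> {1..n}" "k \<in> {1..n}" "q 0 = i" "q L = k" "\<forall>t\<in>{1..<L}. q t \<in> {1..n}"
  shows "\<forall>u\<le>L. q u \<in> {1..n}"
proof (intro allI impI)
  fix u assume "u \<le> L"
  then have "u = 0 \<or> u = L \<or> u \<in> {1..<L}" by auto
  then show "q u \<in> {1..n}" using assms by auto
qed

lemma bstar_fin:
  assumes i: "i \<in> {1..n}" and k: "k \<in> {1..n}"
  shows "bstar n b i k \<noteq> \<infinity>"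
proof -
  define R where "R = max 0 (Max ((\<lambda>(i,k). real_of_ereal (b i k)) ` ({1..n}\<times>{1..n})))"
  have R0: "0 \<le> R" unfolding R_def by simp
  have bR: "b i' k' \<le> ereal R" if "i' \<in> {1..n}" "k' \<in> {1..n}" for i' k'
  proof (cases "b i' k'")
    case (real r)
    have "r \<le> Max ((\<lambda>(i,k). real_of_ereal (b i k)) ` ({1..n}\<times>{1..n}))"
      using that real by (intro Max_ge) force+
    then show ?thesis using real unfolding R_def by (simp add: le_max_iff_disj)
  next
    case PInf then show ?thesis using b_ninf that by auto
  qed simp
  have "beta n b i k \<le> ereal (real (n - 1) * R)"
    unfolding beta_def
  proof (rule Sup_least)
    fix x assume "x \<in> {path_weight b p l | l p. 1 \<le> l \<and> l \<le> n - 1 \<and> p 0 = i \<and> p l = k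
                        \<and> (\<forall>t\<in>{1..<l}. p t \<in> {1..n})}"
    then obtain L q where h: "1 \<le> L" "L \<le> n - 1" "q 0 = i" "q L = k" "\<forall>t\<in>{1..<L}. q t \<in> {1..n}"
      and x: "x = path_weight b q L" by blast
    have V: "\<forall>u\<le>L. q u \<in> {1..n}" using path_verts[OF i k h(3-5)] .
    have "x \<le> (\<Sum>t<L. ereal R)"
      unfolding x path_weight_def using V by (intro sum_mono bR) auto
    also have "\<dots> = ereal (real L * R)" by simp
    also have "\<dots> \<le> ereal (real (n - 1) * R)" using h R0 by (simp add: mult_right_mono)
    finally show "x \<le> ereal (real (n - 1) * R)" .
  qed
  then show ?thesis unfolding bstar_def by (cases "beta n b i k") (auto simp: max_def)
qed

lemma bstar_cases:
  assumes "i \<in> {1..n}" "k \<in> {1..n}"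
  obtains "bstar n b i k = -\<infinity>" | \<beta> where "bstar n b i k = ereal \<beta>"
  using bstar_fin[OF assms] by (cases "bstar n b i k") auto

lemma b_bstar:
  assumes i: "i \<in> {1..n}" and k: "k \<in> {1..n}" and l: "l \<in> {1..n}"
  shows "b i k + bstar n b k l \<le> bstar n b i l"
proof (cases "b i k")
  case MInf then show ?thesis using bstar_fin[OF k l] by (cases "bstar n b k l") auto
next
  case PInf then show ?thesis using b_ninf i k by auto
next
  case (real r)
  have A: "b i k + beta n b k l \<le> bstar n b i l"
  proof -
    have "beta n b k l \<le> bstar n b i l - ereal r"
      unfolding beta_def
    proof (rule Sup_least)
      fix x assume "x \<in> {path_weight b p L | L p. 1 \<le> L \<and> L \<le> n - 1 \<and> p 0 = k \<and> p L = l
                        \<and> (\<forall>t\<in>{1..<L}. p t \<in> {1..n})}"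
      then obtain L q where h: "1 \<le> L" "L \<le> n - 1" "q 0 = k" "q L = l" "\<forall>t\<in>{1..<L}. q t \<in> {1..n}"
        and x: "x = path_weight b q L" by blast
      define q' where "q' u = (if u = 0 then i else q (u - 1))" for u
      have "path_weight b q' (Suc L) = b i k + x"
        unfolding pw_shift0 x using h by (simp add: q'_def)
      moreover have "path_weight b q' (Suc L) \<le> bstar n b i l"
      proof (rule path_le_bstar[OF i l])
        show "1 \<le> Suc L" "q' 0 = i" "q' (Suc L) = l" using h by (auto simp: q'_def)
        show "\<forall>u\<le>Suc L. q' u \<in> {1..n}"
        proof (intro allI impI)
          fix u assume "u \<le> Suc L"
          then consider "u = 0" | "u = 1" | "u = Suc L" | "u - 1 \<in> {1..<L}" by fastforce
          then show "q' u \<in> {1..n}" using h i k l by cases (auto simp: q'_def)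
        qed
      qed
      ultimately have "x + ereal r \<le> bstar n b i l" using real by (simp add: add.commute)
      then show "x \<le> bstar n b i l - ereal r" by (simp add: ereal_le_minus)
    qed
    then have "beta n b k l + ereal r \<le> bstar n b i l" by (simp add: ereal_le_minus)
    then show ?thesis using real by (simp add: add.commute)
  qed
  have B: "b i k \<le> bstar n b i k"
  proof -
    have "path_weight b (\<lambda>u. if u = 0 then i else k) 1 = b i k" by (simp add: path_weight_def)
    moreover have "path_weight b (\<lambda>u. if u = 0 then i else k) 1 \<le> bstar n b i k"
      using i k by (intro path_le_bstar) auto
    ultimately show ?thesis by simp
  qed
  show ?thesis
  proof (cases "k = l")
    case True
    then show ?thesis using A B by (auto simp: bstar_def max_def)
  next
    case False
    then show ?thesis using A by (simp add: bstar_def)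
  qed
qed

end



lemma abs_scale:
  fixes c x p r :: real
  assumes "c \<noteq> 0"
  shows "(\<bar>x - p\<bar> \<le> r) \<longleftrightarrow> (c*p - \<bar>c\<bar>*r \<le> c*x \<and> c*x \<le> c*p + \<bar>c\<bar>*r)"
proof -
  have "\<bar>c*x - c*p\<bar> = \<bar>c\<bar> * \<bar>x - p\<bar>" by (simp add: abs_mult[symmetric] algebra_simps)
  have "(\<bar>x - p\<bar> \<le> r) \<longleftrightarrow> \<bar>c\<bar> * \<bar>x - p\<bar> \<le> \<bar>c\<bar> * r" using assms by simp
  also have "\<dots> \<longleftrightarrow> \<bar>c*x - c*p\<bar> \<le> \<bar>c\<bar> * r" using \<open>\<bar>c*x - c*p\<bar> = _\<close> by simp
  also have "\<dots> \<longleftrightarrow> (c*p - \<bar>c\<bar>*r \<le> c*x \<and> c*x \<le> c*p + \<bar>c\<bar>*r)" by (simp add: abs_le_iff) arith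
  finally show ?thesis .
qed

lemma obj_elem:
  fixes c x p w h t :: real
  assumes "c \<noteq> 0" "w > 0"
  shows "(w*\<bar>x-p\<bar> + h \<le> t) \<longleftrightarrow> (\<bar>c\<bar>*(h-t)/w + c*p \<le> c*x \<and> c*x \<le> \<bar>c\<bar>*(t-h)/w + c*p)"
proof -
  have "(w*\<bar>x-p\<bar> + h \<le> t) \<longleftrightarrow> \<bar>x-p\<bar> \<le> (t-h)/w" using assms by (simp add: pos_le_divide_eq algebra_simps)
  also have "\<dots> \<longleftrightarrow> (c*p - \<bar>c\<bar>*((t-h)/w) \<le> c*x \<and> c*x \<le> c*p + \<bar>c\<bar>*((t-h)/w))" by (rule abs_scale[OF assms(1)])
  also have "c*p - \<bar>c\<bar>*((t-h)/w) = \<bar>c\<bar>*(h-t)/w + c*p" using assms(2) by (simp add: field_simps)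
  also have "c*p + \<bar>c\<bar>*((t-h)/w) = \<bar>c\<bar>*(t-h)/w + c*p" using assms(2) by (simp add: field_simps)
  finally show ?thesis .
qed

lemma fg_elem:
  fixes c x f g :: real
  assumes "c \<noteq> 0" "f \<le> g"
  shows "(f \<le> x \<and> x \<le> g) \<longleftrightarrow> (min (c*f) (c*g) \<le> c*x \<and> c*x \<le> max (c*f) (c*g))"
proof (cases "c > 0")
  case True
  then have "c*f \<le> c*g" using assms by simp
  then show ?thesis using True by (simp add: min_def max_def)
next
  case False
  then have c: "c < 0" using assms by simp
  then have "c*g \<le> c*f" using assms by (simp add: mult_le_cancel_left)
  then show ?thesis using c by (auto simp: min_def max_def mult_le_cancel_left)
qed

context cor2
begin

definition LL :: "nat \<Rightarrow> real \<Rightarrow> real" where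
  "LL k t = Max ((\<lambda>j. max (max (\<bar>c k\<bar> * (h j - t) / w j + c k * p k j)
                                  (c k * p k j - \<bar>c k\<bar> * d j))
                             (min (c k * f k) (c k * g k))) ` {1..m})"

definition UU :: "nat \<Rightarrow> real \<Rightarrow> real" where
  "UU i t = Min ((\<lambda>j. min (min (\<bar>c i\<bar> * (t - h j) / w j + c i * p i j)
                                                          (c i * p i j + \<bar>c i\<bar> * d j))
                                                     (max (c i * f i) (c i * g i))) ` {1..m})"

lemma LL_le: "LL k t \<le> y \<longleftrightarrow> (\<forall>j\<in>{1..m}. \<bar>c k\<bar> * (h j - t) / w j + c k * p k j \<le> y \<and>
   c k * p k j - \<bar>c k\<bar> * d j \<le> y \<and> min (c k * f k) (c k * g k) \<le> y)"
  unfolding LL_def using m by (subst Max_le_iff) auto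

lemma UU_ge: "y \<le> UU i t \<longleftrightarrow> (\<forall>j\<in>{1..m}. y \<le> \<bar>c i\<bar> * (t - h j) / w j + c i * p i j \<and>
   y \<le> c i * p i j + \<bar>c i\<bar> * d j \<and> y \<le> max (c i * f i) (c i * g i))"
  unfolding UU_def using m by (subst Min_ge_iff) auto

lemma cheb_le: "cheb n x p j \<le> r \<longleftrightarrow> (\<forall>i\<in>{1..n}. \<bar>x i - p i j\<bar> \<le> r)"
  unfolding cheb_def using n by (subst Max_le_iff) auto

lemma objcheb_le:
  assumes "j \<in> {1..m}"
  shows "w j * cheb n x p j + h j \<le> t \<longleftrightarrow> (\<forall>i\<in>{1..n}. w j * \<bar>x i - p i j\<bar> + h j \<le> t)"
proof -
  have wj: "w j > 0" using w assms by auto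
  have "w j * cheb n x p j + h j \<le> t \<longleftrightarrow> cheb n x p j \<le> (t - h j) / w j"
    using wj by (simp add: pos_le_divide_eq algebra_simps)
  also have "\<dots> \<longleftrightarrow> (\<forall>i\<in>{1..n}. \<bar>x i - p i j\<bar> \<le> (t - h j) / w j)" by (rule cheb_le)
  also have "\<dots> \<longleftrightarrow> (\<forall>i\<in>{1..n}. w j * \<bar>x i - p i j\<bar> + h j \<le> t)"
    using wj by (simp add: pos_le_divide_eq algebra_simps)
  finally show ?thesis .
qed

lemma objective_le: "objective n m p w h x \<le> t \<longleftrightarrow> (\<forall>j\<in>{1..m}. w j * cheb n x p j + h j \<le> t)"
  unfolding objective_def using m by (subst Max_le_iff) auto

lemma B1:
  "(feasible n m p d b c f g x \<and> objective n m p w h x \<le> t) \<longleftrightarrow>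
   ((\<forall>i\<in>{1..n}. LL i t \<le> c i * x i \<and> c i * x i \<le> UU i t) \<and>
    (\<forall>i\<in>{1..n}. \<forall>k\<in>{1..n}. b i k + ereal (c k * x k) \<le> ereal (c i * x i)))" (is "?L \<longleftrightarrow> ?R")
proof -
  have e1: "\<And>i j. i\<in>{1..n} \<Longrightarrow> j\<in>{1..m} \<Longrightarrow> (\<bar>x i - p i j\<bar> \<le> d j) \<longleftrightarrow>
      (c i * p i j - \<bar>c i\<bar> * d j \<le> c i * x i \<and> c i * x i \<le> c i * p i j + \<bar>c i\<bar> * d j)"
    using c by (auto intro!: abs_scale)
  have e2: "\<And>i j. i\<in>{1..n} \<Longrightarrow> j\<in>{1..m} \<Longrightarrow> (w j * \<bar>x i - p i j\<bar> + h j \<le> t) \<longleftrightarrow>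
      (\<bar>c i\<bar> * (h j - t) / w j + c i * p i j \<le> c i * x i \<and> c i * x i \<le> \<bar>c i\<bar> * (t - h j) / w j + c i * p i j)"
    using c w by (auto intro!: obj_elem)
  have e3: "\<And>i. i\<in>{1..n} \<Longrightarrow> (f i \<le> x i \<and> x i \<le> g i) \<longleftrightarrow>
      (min (c i * f i) (c i * g i) \<le> c i * x i \<and> c i * x i \<le> max (c i * f i) (c i * g i))"
    using c fg by (auto intro!: fg_elem)
  have o: "objective n m p w h x \<le> t \<longleftrightarrow> (\<forall>j\<in>{1..m}. \<forall>i\<in>{1..n}. w j * \<bar>x i - p i j\<bar> + h j \<le> t)"
    unfolding objective_le using objcheb_le by auto
  have m1: "1 \<in> {1..m}" using m by auto
  have per: "((\<forall>j\<in>{1..m}. \<bar>x i - p i j\<bar> \<le> d j) \<and> (f i \<le> x i \<and> x i \<le> g i) \<and>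
      (\<forall>j\<in>{1..m}. w j * \<bar>x i - p i j\<bar> + h j \<le> t)) \<longleftrightarrow> (LL i t \<le> c i * x i \<and> c i * x i \<le> UU i t)"
    if i: "i \<in> {1..n}" for i
    unfolding LL_le UU_ge using i m1 by (simp add: e1 e2 e3 ball_conj_distrib) blast
  have "(feasible n m p d b c f g x \<and> objective n m p w h x \<le> t) \<longleftrightarrow>
     (\<forall>i\<in>{1..n}. (\<forall>j\<in>{1..m}. \<bar>x i - p i j\<bar> \<le> d j) \<and> (f i \<le> x i \<and> x i \<le> g i) \<and>
      (\<forall>j\<in>{1..m}. w j * \<bar>x i - p i j\<bar> + h j \<le> t)) \<and>
     (\<forall>i\<in>{1..n}. \<forall>k\<in>{1..n}. b i k + ereal (c k * x k) \<le> ereal (c i * x i))"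
    unfolding feasible_def o cheb_le by blast
  also have "\<dots> \<longleftrightarrow> ?R" using per by simp
  finally show ?thesis .
qed

end


lemma T2_iff:
  fixes a wj hj t \<beta> cip q :: real
  assumes "a > 0" "wj > 0"
  shows "(q + \<beta> \<le> a*(t - hj)/wj + cip) \<longleftrightarrow> hj + wj/a * (\<beta> - cip + q) \<le> t"
proof -
  have "a \<noteq> 0" "wj \<noteq> 0" using assms by auto
  then show ?thesis using assms by (simp add: field_simps)
qed
lemma T3_iff:
  fixes bk wl hl t \<beta> ckp u :: real
  assumes "bk > 0" "wl > 0"
  shows "(bk*(hl - t)/wl + ckp + \<beta> \<le> u) \<longleftrightarrow> hl + wl/bk * (\<beta> - u + ckp) \<le> t"
proof -
  have "bk \<noteq> 0" "wl \<noteq> 0" using assms by auto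
  then show ?thesis using assms by (simp add: field_simps)
qed
lemma T1_iff:
  fixes a bk wj wl hj hl t \<beta> cip ckp :: real
  assumes "a > 0" "bk > 0" "wj > 0" "wl > 0"
  shows "(bk*(hl - t)/wl + ckp + \<beta> \<le> a*(t - hj)/wj + cip) \<longleftrightarrow>
    (a*wl*hj + bk*wj*hl)/(a*wl + bk*wj) + wj*wl/(bk*wj + a*wl) * (\<beta> - cip + ckp) \<le> t"
proof -
  have D: "a*wl + bk*wj > 0" "bk*wj + a*wl > 0" using assms by (simp_all add: add_pos_pos)
  have "bk \<noteq> 0" "wl \<noteq> 0" "a \<noteq> 0" "wj \<noteq> 0" "a*wl + bk*wj \<noteq> 0" "bk*wj + a*wl \<noteq> 0" using assms D by auto
  have e1: "(a*wl*hj + bk*wj*hl)/(a*wl + bk*wj) + wj*wl/(bk*wj + a*wl) * (\<beta> - cip + ckp)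
     = ((a*wl*hj + bk*wj*hl) + wj*wl*(\<beta> - cip + ckp))/(a*wl + bk*wj)"
    by (simp add: add_divide_distrib add.commute)
  have e2: "\<dots> \<le> t \<longleftrightarrow> (a*wl*hj + bk*wj*hl) + wj*wl*(\<beta> - cip + ckp) \<le> t*(a*wl + bk*wj)"
    using D by (simp add: pos_divide_le_eq)
  have e3: "(bk*(hl - t)/wl + ckp + \<beta> \<le> a*(t - hj)/wj + cip) \<longleftrightarrow> (a*wl*hj + bk*wj*hl) + wj*wl*(\<beta> - cip + ckp) \<le> t*(a*wl + bk*wj)"
    using assms \<open>bk \<noteq> 0\<close> \<open>wl \<noteq> 0\<close> \<open>a \<noteq> 0\<close> \<open>wj \<noteq> 0\<close> by (simp add: field_simps)
  show ?thesis unfolding e1 e2 e3 ..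
qed
lemma jl_real:
  fixes a bk wj wl hj hl t \<beta> cip ckp e fk u F :: real
  assumes "a > 0" "bk > 0" "wj > 0" "wl > 0" and K: "\<beta> + max e fk \<le> min u F"
  shows "(max (max (bk*(hl - t)/wl + ckp) e) fk + \<beta> \<le> min (min (a*(t - hj)/wj + cip) u) F) \<longleftrightarrow>
     max (max ((a*wl*hj + bk*wj*hl)/(a*wl + bk*wj) + wj*wl/(bk*wj + a*wl) * (\<beta> - cip + ckp))
               (hj + wj/a * (\<beta> - cip + max e fk)))
          (hl + wl/bk * (\<beta> - min u F + ckp)) \<le> t" (is "?L \<longleftrightarrow> max (max ?T1 ?T2) ?T3 \<le> t")
proof -
  have "?L \<longleftrightarrow>
    (bk*(hl - t)/wl + ckp + \<beta> \<le> a*(t - hj)/wj + cip) \<and> (max e fk + \<beta> \<le> a*(t - hj)/wj + cip)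
     \<and> (bk*(hl - t)/wl + ckp + \<beta> \<le> min u F)"
    using K by (auto simp: max_def min_def)
  also have "\<dots> \<longleftrightarrow> ?T1 \<le> t \<and> ?T2 \<le> t \<and> ?T3 \<le> t"
  proof -
    have i1: "(bk*(hl - t)/wl + ckp + \<beta> \<le> a*(t - hj)/wj + cip) \<longleftrightarrow> ?T1 \<le> t" by (rule T1_iff[OF assms(1-4)])
    have i2: "(max e fk + \<beta> \<le> a*(t - hj)/wj + cip) \<longleftrightarrow> ?T2 \<le> t" by (rule T2_iff[OF assms(1,3)])
    have i3: "(bk*(hl - t)/wl + ckp + \<beta> \<le> min u F) \<longleftrightarrow> ?T3 \<le> t" by (rule T3_iff[OF assms(2,4)])
    show ?thesis by (simp only: i1 i2 i3)
  qed
  also have "\<dots> \<longleftrightarrow> max (max ?T1 ?T2) ?T3 \<le> t" by simp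
  finally show ?thesis .
qed



lemma maxmin_aux:
  fixes \<beta> ME fk MU F e u :: real
  assumes "\<beta> + max ME fk \<le> min MU F" "e \<le> ME" "MU \<le> u"
  shows "\<beta> + max e fk \<le> min u F"
proof -
  have "max e fk \<le> max ME fk" using assms(2) by (rule max.mono) simp
  moreover have "min MU F \<le> min u F" using assms(3) by (rule min.mono) simp
  ultimately show ?thesis using assms(1) by linarith
qed

context cor2
begin

definition TT :: "nat \<Rightarrow> nat \<Rightarrow> nat \<Rightarrow> nat \<Rightarrow> ereal" where
  "TT i k j l = max (max
       (ereal ((\<bar>c i\<bar> * w l * h j + \<bar>c k\<bar> * w j * h l) / (\<bar>c i\<bar> * w l + \<bar>c k\<bar> * w j))
         + ereal (w j * w l / (\<bar>c k\<bar> * w j + \<bar>c i\<bar> * w l))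
           * (bstar n b i k - ereal (c i * p i j) + ereal (c k * p k l)))
       (ereal (h j) + ereal (w j / \<bar>c i\<bar>)
           * (bstar n b i k - ereal (c i * p i j) + ereal (lowq p d c f g k l))))
       (ereal (h l) + ereal (w l / \<bar>c k\<bar>)
           * (bstar n b i k - ereal (uppq p d c f g i j) + ereal (c k * p k l)))"

lemma theta_eq: "theta n m p w d h b c f g = Max ((\<lambda>(i,k,j,l). TT i k j l) ` ({1..n}\<times>{1..n}\<times>{1..m}\<times>{1..m}))"
  unfolding theta_def TT_def by simp

lemma emax: "max (ereal x) (ereal y) = ereal (max x y)" by (simp add: max_def)

lemma TT_minf:
  assumes "i \<in> {1..n}" "k \<in> {1..n}" "j \<in> {1..m}" "l \<in> {1..m}" "bstar n b i k = -\<infinity>"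
  shows "TT i k j l = -\<infinity>"
proof -
  have pos: "w j * w l / (\<bar>c k\<bar> * w j + \<bar>c i\<bar> * w l) > 0" "w j / \<bar>c i\<bar> > 0" "w l / \<bar>c k\<bar> > 0"
    using assms w c by (auto intro!: divide_pos_pos add_pos_pos mult_pos_pos)
  have ne: "w j * w l / (\<bar>c k\<bar> * w j + \<bar>c i\<bar> * w l) \<noteq> 0" "w j / \<bar>c i\<bar> \<noteq> 0" "w l / \<bar>c k\<bar> \<noteq> 0"
    using pos by auto
  have m1: "-\<infinity> - ereal x = -\<infinity>" for x by simp
  have a1: "-\<infinity> + ereal x = -\<infinity>" for x by simp
  have t1: "ereal r * -\<infinity> = -\<infinity>" if "r > 0" for r using that by simp
  have p1: "ereal x + -\<infinity> = -\<infinity>" for x by simp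
  show ?thesis unfolding TT_def assms(5)
    by (simp only: m1 a1 t1[OF pos(1)] t1[OF pos(2)] t1[OF pos(3)] p1 max.idem)
qed

lemma TT_real:
  assumes "i \<in> {1..n}" "k \<in> {1..n}" "j \<in> {1..m}" "l \<in> {1..m}" "bstar n b i k = ereal \<beta>"
  shows "TT i k j l = ereal (max (max ((\<bar>c i\<bar>*w l*h j + \<bar>c k\<bar>*w j*h l)/(\<bar>c i\<bar>*w l + \<bar>c k\<bar>*w j)
       + w j*w l/(\<bar>c k\<bar>*w j + \<bar>c i\<bar>*w l) * (\<beta> - c i * p i j + c k * p k l))
               (h j + w j/\<bar>c i\<bar> * (\<beta> - c i * p i j + max (c k * p k l - \<bar>c k\<bar> * d l) (min (c k * f k) (c k * g k)))))
          (h l + w l/\<bar>c k\<bar> * (\<beta> - min (c i * p i j + \<bar>c i\<bar> * d j) (max (c i * f i) (c i * g i)) + c k * p k l)))"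
  unfolding TT_def lowq_def uppq_def assms(5)
  by (simp only: ereal_minus(1) plus_ereal.simps(1) times_ereal.simps(1) emax)

lemma LL_le': "LL k t \<le> y \<longleftrightarrow> (\<forall>l\<in>{1..m}. max (max (\<bar>c k\<bar> * (h l - t) / w l + c k * p k l)
                                  (c k * p k l - \<bar>c k\<bar> * d l))
                             (min (c k * f k) (c k * g k)) \<le> y)"
  unfolding LL_def using m by (subst Max_le_iff) auto

lemma UU_ge': "y \<le> UU i t \<longleftrightarrow> (\<forall>j\<in>{1..m}. y \<le> min (min (\<bar>c i\<bar> * (t - h j) / w j + c i * p i j)
                                                          (c i * p i j + \<bar>c i\<bar> * d j))
                                                     (max (c i * f i) (c i * g i)))"
  unfolding UU_def using m by (subst Min_ge_iff) auto

lemma pair_cond: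
  assumes i: "i \<in> {1..n}" and k: "k \<in> {1..n}"
  shows "(bstar n b i k + ereal (LL k t) \<le> ereal (UU i t)) \<longleftrightarrow> (\<forall>j\<in>{1..m}. \<forall>l\<in>{1..m}. TT i k j l \<le> ereal t)"
proof (cases rule: bstar_cases[OF i k])
  case 1
  then show ?thesis using TT_minf[OF i k] by simp
next
  case (2 \<beta>)
  have ci: "\<bar>c i\<bar> > 0" and ck: "\<bar>c k\<bar> > 0" using c i k by auto
  have K: "\<beta> + max (c k * p k l - \<bar>c k\<bar> * d l) (min (c k * f k) (c k * g k))
        \<le> min (c i * p i j + \<bar>c i\<bar> * d j) (max (c i * f i) (c i * g i))"
    if j: "j \<in> {1..m}" and l: "l \<in> {1..m}" for j l
  proof -
    have c2: "\<beta> + max (Max ((\<lambda>l. c k * p k l - \<bar>c k\<bar> * d l) ` {1..m})) (min (c k * f k) (c k * g k))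
         \<le> min (Min ((\<lambda>j. c i * p i j + \<bar>c i\<bar> * d j) ` {1..m})) (max (c i * f i) (c i * g i))"
    proof -
      have "bstar n b i k + ereal (max (Max ((\<lambda>l. c k * p k l - \<bar>c k\<bar> * d l) ` {1..m})) (min (c k * f k) (c k * g k)))
         \<le> ereal (min (Min ((\<lambda>j. c i * p i j + \<bar>c i\<bar> * d j) ` {1..m})) (max (c i * f i) (c i * g i)))"
        using cond2 i k by blast
      from this[unfolded 2 plus_ereal.simps(1) ereal_less_eq(3)] show ?thesis .
    qed
    have h1: "c k * p k l - \<bar>c k\<bar> * d l \<le> Max ((\<lambda>l. c k * p k l - \<bar>c k\<bar> * d l) ` {1..m})"
      using l by (intro Max_ge) auto
    have h2: "Min ((\<lambda>j. c i * p i j + \<bar>c i\<bar> * d j) ` {1..m}) \<le> c i * p i j + \<bar>c i\<bar> * d j"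
      using j by (intro Min_le) auto
    show ?thesis using c2 h1 h2 by (rule maxmin_aux)
  qed
  have "(bstar n b i k + ereal (LL k t) \<le> ereal (UU i t)) \<longleftrightarrow> LL k t \<le> UU i t - \<beta>"
    using 2 by (simp add: le_diff_eq add.commute)
  also have "\<dots> \<longleftrightarrow> (\<forall>l\<in>{1..m}. \<forall>j\<in>{1..m}. max (max (\<bar>c k\<bar> * (h l - t) / w l + c k * p k l)
                                  (c k * p k l - \<bar>c k\<bar> * d l))
                             (min (c k * f k) (c k * g k)) + \<beta> \<le> min (min (\<bar>c i\<bar> * (t - h j) / w j + c i * p i j)
                                                          (c i * p i j + \<bar>c i\<bar> * d j))
                                                     (max (c i * f i) (c i * g i)))"
    unfolding LL_le' by (simp add: le_diff_eq UU_ge')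
  also have "\<dots> \<longleftrightarrow> (\<forall>l\<in>{1..m}. \<forall>j\<in>{1..m}.
      max (max ((\<bar>c i\<bar>*w l*h j + \<bar>c k\<bar>*w j*h l)/(\<bar>c i\<bar>*w l + \<bar>c k\<bar>*w j)
       + w j*w l/(\<bar>c k\<bar>*w j + \<bar>c i\<bar>*w l) * (\<beta> - c i * p i j + c k * p k l))
               (h j + w j/\<bar>c i\<bar> * (\<beta> - c i * p i j + max (c k * p k l - \<bar>c k\<bar> * d l) (min (c k * f k) (c k * g k)))))
          (h l + w l/\<bar>c k\<bar> * (\<beta> - min (c i * p i j + \<bar>c i\<bar> * d j) (max (c i * f i) (c i * g i)) + c k * p k l)) \<le> t)"
  proof (intro ball_cong refl)
    fix l j assume l: "l \<in> {1..m}" and j: "j \<in> {1..m}"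
    show "(max (max (\<bar>c k\<bar> * (h l - t) / w l + c k * p k l)
                                  (c k * p k l - \<bar>c k\<bar> * d l))
                             (min (c k * f k) (c k * g k)) + \<beta> \<le> min (min (\<bar>c i\<bar> * (t - h j) / w j + c i * p i j)
                                                          (c i * p i j + \<bar>c i\<bar> * d j))
                                                     (max (c i * f i) (c i * g i))) =
      (max (max ((\<bar>c i\<bar>*w l*h j + \<bar>c k\<bar>*w j*h l)/(\<bar>c i\<bar>*w l + \<bar>c k\<bar>*w j)
       + w j*w l/(\<bar>c k\<bar>*w j + \<bar>c i\<bar>*w l) * (\<beta> - c i * p i j + c k * p k l))
               (h j + w j/\<bar>c i\<bar> * (\<beta> - c i * p i j + max (c k * p k l - \<bar>c k\<bar> * d l) (min (c k * f k) (c k * g k)))))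
          (h l + w l/\<bar>c k\<bar> * (\<beta> - min (c i * p i j + \<bar>c i\<bar> * d j) (max (c i * f i) (c i * g i)) + c k * p k l)) \<le> t)"
      by (rule jl_real[OF ci ck _ _ K[OF j l]]) (use w j l in auto)
  qed
  also have "\<dots> \<longleftrightarrow> (\<forall>j\<in>{1..m}. \<forall>l\<in>{1..m}. TT i k j l \<le> ereal t)"
    using TT_real[OF i k _ _ 2] by auto
  finally show ?thesis .
qed

lemma theta_le_iff:
  "theta n m p w d h b c f g \<le> ereal t \<longleftrightarrow> (\<forall>i\<in>{1..n}. \<forall>k\<in>{1..n}. bstar n b i k + ereal (LL k t) \<le> ereal (UU i t))"
proof -
  have ne: "{1..n}\<times>{1..n}\<times>{1..m}\<times>{1..m} \<noteq> {}" using n m by auto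
  have "theta n m p w d h b c f g \<le> ereal t \<longleftrightarrow> (\<forall>x\<in>{1..n}\<times>{1..n}\<times>{1..m}\<times>{1..m}. (\<lambda>(i,k,j,l). TT i k j l) x \<le> ereal t)"
    unfolding theta_eq using ne by (subst Max_le_iff) auto
  also have "\<dots> \<longleftrightarrow> (\<forall>i\<in>{1..n}. \<forall>k\<in>{1..n}. \<forall>j\<in>{1..m}. \<forall>l\<in>{1..m}. TT i k j l \<le> ereal t)" by auto
  also have "\<dots> \<longleftrightarrow> (\<forall>i\<in>{1..n}. \<forall>k\<in>{1..n}. bstar n b i k + ereal (LL k t) \<le> ereal (UU i t))"
    using pair_cond by auto
  finally show ?thesis .
qed

end



lemma ereal_minus_conv:
  fixes B :: ereal
  assumes "B \<noteq> \<infinity>"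
  shows "(ereal v \<le> ereal U - B) \<longleftrightarrow> (B + ereal v \<le> ereal U)"
  using assms by (cases B) auto

context cor2
begin

lemma bstar_diag: "0 \<le> bstar n b i i"
  unfolding bstar_def by simp

lemma TT_cases:
  assumes ik: "i \<in> {1..n}" "k \<in> {1..n}" "j \<in> {1..m}" "l \<in> {1..m}"
  shows "TT i k j l = -\<infinity> \<or> (\<exists>X. TT i k j l = ereal X)"
proof (cases rule: bstar_cases[OF ik(1,2)])
  case 1 then show ?thesis using TT_minf[OF ik] by blast
next
  case (2 \<beta>) then show ?thesis using TT_real[OF ik 2] by blast
qed

lemma theta_fin: "\<exists>t0. theta n m p w d h b c f g = ereal t0"
proof -
  let ?S = "(\<lambda>(i,k,j,l). TT i k j l) ` ({1..n}\<times>{1..n}\<times>{1..m}\<times>{1..m})"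
  have fin: "finite ?S" by auto
  have ne: "?S \<noteq> {}" using n m by auto
  have "Max ?S \<in> ?S" using fin ne by (rule Max_in)
  then obtain i k j l where ik: "i \<in> {1..n}" "k \<in> {1..n}" "j \<in> {1..m}" "l \<in> {1..m}"
    and eq: "Max ?S = TT i k j l" by auto
  have ninf: "Max ?S \<noteq> \<infinity>"
    unfolding eq using TT_cases[OF ik] by auto
  have one: "(1::nat) \<in> {1..n}" "(1::nat) \<in> {1..m}" using n m by auto
  obtain \<beta> where \<beta>: "bstar n b 1 1 = ereal \<beta>"
    using bstar_diag[of 1] by (cases rule: bstar_cases[OF one(1) one(1)]) auto
  have "TT 1 1 1 1 \<le> Max ?S" using fin one by (intro Max_ge) force+
  moreover have "TT 1 1 1 1 \<noteq> -\<infinity>"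
  proof -
    obtain X where "TT 1 1 1 1 = ereal X" using TT_real[OF one(1) one(1) one(2) one(2) \<beta>] by blast
    then show ?thesis by simp
  qed
  ultimately have "Max ?S \<noteq> -\<infinity>" by auto
  with ninf show ?thesis unfolding theta_eq by (cases "Max ?S") auto
qed

lemma ystar:
  fixes v U :: "nat \<Rightarrow> real"
  assumes A: "\<forall>i\<in>{1..n}. \<forall>k\<in>{1..n}. bstar n b i k + ereal (v k) \<le> ereal (U i)"
  defines "Y \<equiv> \<lambda>i. Max ((\<lambda>k. bstar n b i k + ereal (v k)) ` {1..n})"
  shows "\<forall>i\<in>{1..n}. Y i = ereal (real_of_ereal (Y i))"
    and "\<forall>i\<in>{1..n}. v i \<le> real_of_ereal (Y i)"
    and "\<forall>i\<in>{1..n}. real_of_ereal (Y i) \<le> U i"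
    and "\<forall>i\<in>{1..n}. \<forall>k\<in>{1..n}. b i k + ereal (real_of_ereal (Y k)) \<le> ereal (real_of_ereal (Y i))"
proof -
  have lo: "ereal (v i) \<le> Y i" if i: "i \<in> {1..n}" for i
  proof -
    have "ereal (v i) \<le> bstar n b i i + ereal (v i)"
      using bstar_diag[of i] add_right_mono[of 0 "bstar n b i i" "ereal (v i)"] by simp
    also have "\<dots> \<le> Y i" unfolding Y_def using i by (intro Max_ge) auto
    finally show ?thesis .
  qed
  have hi: "Y i \<le> ereal (U i)" if i: "i \<in> {1..n}" for i
    unfolding Y_def using i A n by (subst Max_le_iff) auto
  have fin: "Y i = ereal (real_of_ereal (Y i))" if i: "i \<in> {1..n}" for i
    using lo[OF i] hi[OF i] by (cases "Y i") auto
  show "\<forall>i\<in>{1..n}. Y i = ereal (real_of_ereal (Y i))" using fin by auto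
  show "\<forall>i\<in>{1..n}. v i \<le> real_of_ereal (Y i)"
    using lo fin by (metis ereal_less_eq(3))
  show "\<forall>i\<in>{1..n}. real_of_ereal (Y i) \<le> U i"
    using hi fin by (metis ereal_less_eq(3))
  show "\<forall>i\<in>{1..n}. \<forall>k\<in>{1..n}. b i k + ereal (real_of_ereal (Y k)) \<le> ereal (real_of_ereal (Y i))"
  proof (intro ballI)
    fix i k assume i: "i \<in> {1..n}" and k: "k \<in> {1..n}"
    have "Y k \<in> (\<lambda>l. bstar n b k l + ereal (v l)) ` {1..n}"
      unfolding Y_def using n by (intro Max_in) auto
    then obtain l where l: "l \<in> {1..n}" and Yk: "Y k = bstar n b k l + ereal (v l)" by auto
    have "b i k + ereal (real_of_ereal (Y k)) = (b i k + bstar n b k l) + ereal (v l)"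
      using fin[OF k] Yk by (simp add: add.assoc)
    also have "\<dots> \<le> bstar n b i l + ereal (v l)"
      using b_bstar[OF i k l] by (rule add_right_mono)
    also have "\<dots> \<le> Y i" unfolding Y_def using l by (intro Max_ge) auto
    also have "\<dots> = ereal (real_of_ereal (Y i))" using fin[OF i] .
    finally show "b i k + ereal (real_of_ereal (Y k)) \<le> ereal (real_of_ereal (Y i))" .
  qed
qed

lemma opt:
  assumes "feasible n m p d b c f g x"
  shows "theta n m p w d h b c f g \<le> ereal (objective n m p w h x)"
proof -
  let ?o = "objective n m p w h x"
  from B1[of x ?o] assms have
    b1: "\<forall>i\<in>{1..n}. LL i ?o \<le> c i * x i \<and> c i * x i \<le> UU i ?o" and
    b2: "\<forall>i\<in>{1..n}. \<forall>k\<in>{1..n}. b i k + ereal (c k * x k) \<le> ereal (c i * x i)" by auto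
  have "\<forall>i\<in>{1..n}. \<forall>k\<in>{1..n}. bstar n b i k + ereal (LL k ?o) \<le> ereal (UU i ?o)"
  proof (intro ballI)
    fix i k assume i: "i \<in> {1..n}" and k: "k \<in> {1..n}"
    have "bstar n b i k + ereal (LL k ?o) \<le> bstar n b i k + ereal (c k * x k)"
      using b1 k by (intro add_left_mono) auto
    also have "\<dots> \<le> ereal (c i * x i)" using beta_pot[OF b2 i k] .
    also have "\<dots> \<le> ereal (UU i ?o)" using b1 i by auto
    finally show "bstar n b i k + ereal (LL k ?o) \<le> ereal (UU i ?o)" .
  qed
  then show ?thesis by (rule theta_le_iff[THEN iffD2])
qed

lemma gen:
  fixes v :: "nat \<Rightarrow> real"
  assumes t0: "theta n m p w d h b c f g = ereal t0"
    and lo: "\<forall>k\<in>{1..n}. LL k t0 \<le> v k"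
    and up: "\<forall>i\<in>{1..n}. \<forall>k\<in>{1..n}. bstar n b i k + ereal (v k) \<le> ereal (UU i t0)"
    and x: "\<forall>i\<in>{1..n}. x i = real_of_ereal (Max ((\<lambda>k. bstar n b i k + ereal (v k)) ` {1..n})) / c i"
  shows "feasible n m p d b c f g x \<and> ereal (objective n m p w h x) = theta n m p w d h b c f g"
proof -
  note Y = ystar[OF up]
  define y where "y i = real_of_ereal (Max ((\<lambda>k. bstar n b i k + ereal (v k)) ` {1..n}))" for i
  have cx: "c i * x i = y i" if "i \<in> {1..n}" for i
    using x c that unfolding y_def by auto
  have "feasible n m p d b c f g x \<and> objective n m p w h x \<le> t0"
    unfolding B1
  proof
    show "\<forall>i\<in>{1..n}. LL i t0 \<le> c i * x i \<and> c i * x i \<le> UU i t0"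
    proof
      fix i assume i: "i \<in> {1..n}"
      have "LL i t0 \<le> v i" using lo i by auto
      moreover have "v i \<le> y i" using Y(2) i unfolding y_def by auto
      moreover have "y i \<le> UU i t0" using Y(3) i unfolding y_def by auto
      ultimately show "LL i t0 \<le> c i * x i \<and> c i * x i \<le> UU i t0" using cx[OF i] by simp
    qed
    show "\<forall>i\<in>{1..n}. \<forall>k\<in>{1..n}. b i k + ereal (c k * x k) \<le> ereal (c i * x i)"
      using Y(4) cx unfolding y_def by simp
  qed
  moreover have "ereal t0 \<le> ereal (objective n m p w h x)"
    using opt[of x] calculation t0 by simp
  ultimately show ?thesis using t0 by auto
qed

end



context cor2
begin

lemma up_conv:
  assumes k: "k \<in> {1..n}"
  shows "(ereal (v k) \<le> Min ((\<lambda>i. ereal (UU i t) - bstar n b i k) ` {1..n})) \<longleftrightarrow>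
         (\<forall>i\<in>{1..n}. bstar n b i k + ereal (v k) \<le> ereal (UU i t))"
proof -
  have "(ereal (v k) \<le> Min ((\<lambda>i. ereal (UU i t) - bstar n b i k) ` {1..n})) \<longleftrightarrow>
        (\<forall>i\<in>{1..n}. ereal (v k) \<le> ereal (UU i t) - bstar n b i k)"
    using n by (subst Min_ge_iff) auto
  also have "\<dots> \<longleftrightarrow> (\<forall>i\<in>{1..n}. bstar n b i k + ereal (v k) \<le> ereal (UU i t))"
    using bstar_fin k ereal_minus_conv by auto
  finally show ?thesis .
qed

lemma main:
  "let \<theta> = theta n m p w d h b c f g in
     (\<exists>x. feasible n m p d b c f g x \<and> ereal (objective n m p w h x) = \<theta>) \<and>
     (\<forall>x. feasible n m p d b c f g x \<longrightarrow> \<theta> \<le> ereal (objective n m p w h x)) \<and>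
     (\<forall>x. (feasible n m p d b c f g x \<and> ereal (objective n m p w h x) = \<theta>) \<longleftrightarrow>
        (\<exists>v :: nat \<Rightarrow> real.
           (\<forall>k\<in>{1..n}.
              Max ((\<lambda>j. max (max (\<bar>c k\<bar> * (h j - real_of_ereal \<theta>) / w j + c k * p k j)
                                  (c k * p k j - \<bar>c k\<bar> * d j))
                             (min (c k * f k) (c k * g k))) ` {1..m}) \<le> v k \<and>
              ereal (v k) \<le> Min ((\<lambda>i. ereal (Min ((\<lambda>j. min (min (\<bar>c i\<bar> * (real_of_ereal \<theta> - h j) / w j + c i * p i j)
                                                          (c i * p i j + \<bar>c i\<bar> * d j))
                                                     (max (c i * f i) (c i * g i))) ` {1..m}))
                                   - bstar n b i k) ` {1..n})) \<and>
           (\<forall>i\<in>{1..n}. x i = real_of_ereal (Max ((\<lambda>k. bstar n b i k + ereal (v k)) ` {1..n})) / c i)))"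
proof -
  obtain t0 where t0: "theta n m p w d h b c f g = ereal t0" using theta_fin by blast
  have P1: "\<exists>x. feasible n m p d b c f g x \<and> ereal (objective n m p w h x) = ereal t0"
  proof -
    have c0: "\<forall>i\<in>{1..n}. \<forall>k\<in>{1..n}. bstar n b i k + ereal (LL k t0) \<le> ereal (UU i t0)"
      using theta_le_iff[of t0] t0 by simp
    define x where "x i = real_of_ereal (Max ((\<lambda>k. bstar n b i k + ereal (LL k t0)) ` {1..n})) / c i" for i
    have "feasible n m p d b c f g x \<and> ereal (objective n m p w h x) = theta n m p w d h b c f g"
      by (rule gen[OF t0 _ c0]) (auto simp: x_def)
    then show ?thesis using t0 by auto
  qed
  have P2: "\<forall>x. feasible n m p d b c f g x \<longrightarrow> ereal t0 \<le> ereal (objective n m p w h x)"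
    using opt t0 by auto
  have P3: "(feasible n m p d b c f g x \<and> ereal (objective n m p w h x) = ereal t0) \<longleftrightarrow>
        (\<exists>v :: nat \<Rightarrow> real.
           (\<forall>k\<in>{1..n}. LL k t0 \<le> v k \<and>
              ereal (v k) \<le> Min ((\<lambda>i. ereal (UU i t0) - bstar n b i k) ` {1..n})) \<and>
           (\<forall>i\<in>{1..n}. x i = real_of_ereal (Max ((\<lambda>k. bstar n b i k + ereal (v k)) ` {1..n})) / c i))" for x
  proof
    assume A: "feasible n m p d b c f g x \<and> ereal (objective n m p w h x) = ereal t0"
    then have "feasible n m p d b c f g x \<and> objective n m p w h x \<le> t0" by simp
    then have b1: "\<forall>i\<in>{1..n}. LL i t0 \<le> c i * x i \<and> c i * x i \<le> UU i t0" and
      b2: "\<forall>i\<in>{1..n}. \<forall>k\<in>{1..n}. b i k + ereal (c k * x k) \<le> ereal (c i * x i)"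
      unfolding B1 by auto
    define v where "v k = c k * x k" for k
    have bp: "bstar n b i k + ereal (v k) \<le> ereal (v i)" if "i \<in> {1..n}" "k \<in> {1..n}" for i k
      unfolding v_def using beta_pot[OF b2 that] .
    show "\<exists>v :: nat \<Rightarrow> real.
           (\<forall>k\<in>{1..n}. LL k t0 \<le> v k \<and>
              ereal (v k) \<le> Min ((\<lambda>i. ereal (UU i t0) - bstar n b i k) ` {1..n})) \<and>
           (\<forall>i\<in>{1..n}. x i = real_of_ereal (Max ((\<lambda>k. bstar n b i k + ereal (v k)) ` {1..n})) / c i)"
    proof (intro exI[of _ v] conjI ballI)
      fix k assume k: "k \<in> {1..n}"
      show "LL k t0 \<le> v k" using b1 k unfolding v_def by auto
      have "\<forall>i\<in>{1..n}. bstar n b i k + ereal (v k) \<le> ereal (UU i t0)"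
      proof
        fix i assume i: "i \<in> {1..n}"
        have "bstar n b i k + ereal (v k) \<le> ereal (v i)" by (rule bp[OF i k])
        also have "\<dots> \<le> ereal (UU i t0)" using b1 i unfolding v_def by auto
        finally show "bstar n b i k + ereal (v k) \<le> ereal (UU i t0)" .
      qed
      then show "ereal (v k) \<le> Min ((\<lambda>i. ereal (UU i t0) - bstar n b i k) ` {1..n})"
        using up_conv[OF k] by blast
    next
      fix i assume i: "i \<in> {1..n}"
      have "Max ((\<lambda>k. bstar n b i k + ereal (v k)) ` {1..n}) = ereal (v i)"
      proof (rule antisym)
        show "Max ((\<lambda>k. bstar n b i k + ereal (v k)) ` {1..n}) \<le> ereal (v i)"
          using n bp[OF i] by (subst Max_le_iff) auto
        have "ereal (v i) \<le> bstar n b i i + ereal (v i)"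
          using bstar_diag[of i] add_right_mono[of 0 "bstar n b i i" "ereal (v i)"] by simp
        also have "\<dots> \<le> Max ((\<lambda>k. bstar n b i k + ereal (v k)) ` {1..n})"
          using i by (intro Max_ge) auto
        finally show "ereal (v i) \<le> Max ((\<lambda>k. bstar n b i k + ereal (v k)) ` {1..n})" .
      qed
      then show "x i = real_of_ereal (Max ((\<lambda>k. bstar n b i k + ereal (v k)) ` {1..n})) / c i"
        using c i unfolding v_def by simp
    qed
  next
    assume "\<exists>v :: nat \<Rightarrow> real.
           (\<forall>k\<in>{1..n}. LL k t0 \<le> v k \<and>
              ereal (v k) \<le> Min ((\<lambda>i. ereal (UU i t0) - bstar n b i k) ` {1..n})) \<and>
           (\<forall>i\<in>{1..n}. x i = real_of_ereal (Max ((\<lambda>k. bstar n b i k + ereal (v k)) ` {1..n})) / c i)"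
    then obtain v :: "nat \<Rightarrow> real" where
      v1: "\<forall>k\<in>{1..n}. LL k t0 \<le> v k" and
      v2: "\<forall>k\<in>{1..n}. ereal (v k) \<le> Min ((\<lambda>i. ereal (UU i t0) - bstar n b i k) ` {1..n})" and
      v3: "\<forall>i\<in>{1..n}. x i = real_of_ereal (Max ((\<lambda>k. bstar n b i k + ereal (v k)) ` {1..n})) / c i"
      by blast
    have up: "\<forall>i\<in>{1..n}. \<forall>k\<in>{1..n}. bstar n b i k + ereal (v k) \<le> ereal (UU i t0)"
      using v2 up_conv by blast
    show "feasible n m p d b c f g x \<and> ereal (objective n m p w h x) = ereal t0"
      using gen[OF t0 v1 up v3] t0 by simp
  qed
  show ?thesis
    unfolding Let_def t0 real_of_ereal.simps(1) LL_def[symmetric] UU_def[symmetric]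
    using P1 P2 P3 by blast
qed

end


theorem corollary2:
  fixes n m :: nat
    and p :: "nat \<Rightarrow> nat \<Rightarrow> real"
    and w d h c f g :: "nat \<Rightarrow> real"
    and b :: "nat \<Rightarrow> nat \<Rightarrow> ereal"
  assumes n: "n \<ge> 1" and m: "m \<ge> 1"
    and w: "\<forall>j\<in>{1..m}. w j > 0"
    and d: "\<forall>j\<in>{1..m}. d j > 0"
    and b_ninf: "\<forall>i\<in>{1..n}. \<forall>k\<in>{1..n}. b i k \<noteq> \<infinity>"
    and c: "\<forall>i\<in>{1..n}. c i \<noteq> 0"
    and fg: "\<forall>i\<in>{1..n}. f i \<le> g i"
    and cyc: "\<forall>i\<in>{1..n}. \<forall>l\<in>{1..n}. \<forall>q. q 0 = i \<and> q l = i \<and> (\<forall>t\<in>{1..<l}. q t \<in> {1..n})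
               \<longrightarrow> path_weight b q l \<le> 0"
    and cond2: "\<forall>i\<in>{1..n}. \<forall>k\<in>{1..n}.
       bstar n b i k + ereal (max (Max ((\<lambda>l. c k * p k l - \<bar>c k\<bar> * d l) ` {1..m})) (min (c k * f k) (c k * g k)))
         \<le> ereal (min (Min ((\<lambda>j. c i * p i j + \<bar>c i\<bar> * d j) ` {1..m})) (max (c i * f i) (c i * g i)))"
  shows "let \<theta> = theta n m p w d h b c f g in
     (\<exists>x. feasible n m p d b c f g x \<and> ereal (objective n m p w h x) = \<theta>) \<and>
     (\<forall>x. feasible n m p d b c f g x \<longrightarrow> \<theta> \<le> ereal (objective n m p w h x)) \<and>
     (\<forall>x. (feasible n m p d b c f g x \<and> ereal (objective n m p w h x) = \<theta>) \<longleftrightarrow>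
        (\<exists>v :: nat \<Rightarrow> real.
           (\<forall>k\<in>{1..n}.
              Max ((\<lambda>j. max (max (\<bar>c k\<bar> * (h j - real_of_ereal \<theta>) / w j + c k * p k j)
                                  (c k * p k j - \<bar>c k\<bar> * d j))
                             (min (c k * f k) (c k * g k))) ` {1..m}) \<le> v k \<and>
              ereal (v k) \<le> Min ((\<lambda>i. ereal (Min ((\<lambda>j. min (min (\<bar>c i\<bar> * (real_of_ereal \<theta> - h j) / w j + c i * p i j)
                                                          (c i * p i j + \<bar>c i\<bar> * d j))
                                                     (max (c i * f i) (c i * g i))) ` {1..m}))
                                   - bstar n b i k) ` {1..n})) \<and>
           (\<forall>i\<in>{1..n}. x i = real_of_ereal (Max ((\<lambda>k. bstar n b i k + ereal (v k)) ` {1..n})) / c i)))"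
    using cor2.main[OF cor2.intro[OF n m w d b_ninf c fg cyc cond2]] .

end
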